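(* There are constants $C_1>0$ and $C_2>0$ such that for every $n$ the following holds: let $r_\star$ be an integer maximising $q_n^r$ over $r$, let $r$ be an integer with $|r-r_\star|\le\sqrt{n\log n}$, and let $d_\star=d_\star(r,n)$ be an integer maximising $q_n^{r,d}$ over $d$. Then \[ C_1\frac{q_n^r}{\sqrt n} \le q_n^{r,d_\star} \le C_2\frac{q_n^r}{\sqrt n}. \]
   Context: $Q(P_n)$ is the family of subsets of $[n]$ containing no two consecutive integers, $Q^{(r)}(P_n)$ its members of size $r$, and $q_n^r=|Q^{(r)}(P_n)|$. The out-degree $d^+(A)$ of $A\in Q(P_n)$ is the number of $b\in[n]\setminus A$ with $A\cup\{b\}\in Q(P_n)$; $q_n^{r,d}$ is the number of $A\in Q^{(r)}(P_n)$ with $d^+(A)=d$. *)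

theory Defs
  imports Complex_Main
begin

definition QP :: "nat \<Rightarrow> nat set set" where
  "QP n = {A. A \<subseteq> {1..n} \<and> (\<forall>i\<in>A. Suc i \<notin> A)}"

definition QPr :: "nat \<Rightarrow> int \<Rightarrow> nat set set" where
  "QPr n r = {A \<in> QP n. int (card A) = r}"

definition q :: "nat \<Rightarrow> int \<Rightarrow> nat" where
  "q n r = card (QPr n r)"

definition outdeg :: "nat \<Rightarrow> nat set \<Rightarrow> nat" where
  "outdeg n A = card {b \<in> {1..n} - A. insert b A \<in> QP n}"

definition qd :: "nat \<Rightarrow> int \<Rightarrow> int \<Rightarrow> nat" where
  "qd n r d = card {A \<in> QPr n r. int (outdeg n A) = d}"

end

theory Submission
  imports Defs
begin


lemma QP_sub: "A \<in> QP n \<Longrightarrow> A \<subseteq> {1..n}" by (simp add: QP_def)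
lemma QP_fin: "A \<in> QP n \<Longrightarrow> finite A" using QP_sub finite_subset by blast
lemma finite_QP: "finite (QP n)"
proof -
  have "QP n \<subseteq> Pow {1..n}" by (auto simp: QP_def)
  thus ?thesis using finite_subset by blast
qed

definition free :: "nat \<Rightarrow> nat set \<Rightarrow> nat set" where
  "free n A = {b \<in> {1..n}. b \<notin> A \<and> Suc b \<notin> A \<and> b - 1 \<notin> A}"

lemma outdeg_free: assumes "A \<in> QP n" shows "outdeg n A = card (free n A)"
proof -
  have "{b \<in> {1..n} - A. insert b A \<in> QP n} = free n A"
  proof (rule set_eqI, rule iffI)
    fix b assume "b \<in> {b \<in> {1..n} - A. insert b A \<in> QP n}"
    then have b: "b \<in> {1..n}" "b \<notin> A" "insert b A \<in> QP n" by auto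
    have "Suc b \<notin> A" using b(3) by (auto simp: QP_def)
    moreover have "b - 1 \<notin> A"
    proof
      assume "b - 1 \<in> A"
      moreover have "Suc (b - 1) = b" using b(1) by auto
      ultimately show False using b(3) unfolding QP_def by blast
    qed
    ultimately show "b \<in> free n A" using b by (simp add: free_def)
  next
    fix b assume "b \<in> free n A"
    then have b: "b \<in> {1..n}" "b \<notin> A" "Suc b \<notin> A" "b - 1 \<notin> A" by (auto simp: free_def)
    have "insert b A \<in> QP n"
      unfolding QP_def
    proof (intro CollectI conjI ballI)
      show "insert b A \<subseteq> {1..n}" using b assms QP_sub by auto
    next
      fix i assume i: "i \<in> insert b A"
      show "Suc i \<notin> insert b A"
      proof (cases "i = b")
        case True thus ?thesis using b by auto
      next
        case False
        hence "i \<in> A" using i by auto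
        hence "Suc i \<notin> A" using assms by (auto simp: QP_def)
        moreover have "Suc i \<noteq> b" using b(4) \<open>i \<in> A\<close> by auto
        ultimately show ?thesis by auto
      qed
    qed
    thus "b \<in> {b \<in> {1..n} - A. insert b A \<in> QP n}" using b by auto
  qed
  thus ?thesis by (simp add: outdeg_def)
qed

lemma outdeg_le: assumes "A \<in> QP n" shows "outdeg n A \<le> n"
proof -
  have "free n A \<subseteq> {1..n}" by (auto simp: free_def)
  hence "card (free n A) \<le> card {1..n}" by (intro card_mono) auto
  thus ?thesis using outdeg_free[OF assms] by simp
qed

definition Fin :: "nat \<Rightarrow> int \<Rightarrow> int \<Rightarrow> nat" where
  "Fin n r d = card {A \<in> QP n. int (card A) = r \<and> int (outdeg n A) = d \<and> n \<in> A}"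
definition Fout :: "nat \<Rightarrow> int \<Rightarrow> int \<Rightarrow> nat" where
  "Fout n r d = card {A \<in> QP n. int (card A) = r \<and> int (outdeg n A) = d \<and> n \<notin> A}"

lemma qd_split: "qd n r d = Fin n r d + Fout n r d"
proof -
  have e: "{A \<in> QPr n r. int (outdeg n A) = d} =
    {A \<in> QP n. int (card A) = r \<and> int (outdeg n A) = d \<and> n \<in> A} \<union>
    {A \<in> QP n. int (card A) = r \<and> int (outdeg n A) = d \<and> n \<notin> A}"
    by (auto simp: QPr_def)
  show ?thesis unfolding qd_def Fin_def Fout_def e
    by (rule card_Un_disjoint) (auto intro: finite_subset[OF _ finite_QP])
qed

lemma free_insert:
  assumes "A \<subseteq> {1..p}"
  shows "free (Suc (Suc p)) (insert (Suc (Suc p)) A) = free p A"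
  using assms by (auto simp: free_def)

lemma Fin_rec: "Fin (Suc (Suc p)) r d = qd p (r - 1) d"
proof -
  let ?S = "{A0 \<in> QPr p (r - 1). int (outdeg p A0) = d}"
  have "{A \<in> QP (Suc (Suc p)). int (card A) = r \<and> int (outdeg (Suc (Suc p)) A) = d \<and> Suc (Suc p) \<in> A}
        = insert (Suc (Suc p)) ` ?S"
  proof (rule set_eqI, rule iffI)
    fix A assume A: "A \<in> {A \<in> QP (Suc (Suc p)). int (card A) = r \<and> int (outdeg (Suc (Suc p)) A) = d \<and> Suc (Suc p) \<in> A}"
    let ?A0 = "A - {Suc (Suc p)}"
    have AQ: "A \<in> QP (Suc (Suc p))" and nA: "Suc (Suc p) \<in> A" using A by auto
    have "Suc p \<notin> A" using AQ nA by (auto simp: QP_def)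
    hence sub: "?A0 \<subseteq> {1..p}" using QP_sub[OF AQ] by (auto simp: le_Suc_eq)
    have A0Q: "?A0 \<in> QP p" using sub AQ by (auto simp: QP_def)
    have Aeq: "A = insert (Suc (Suc p)) ?A0" using nA by auto
    have fin: "finite ?A0" using sub finite_subset by blast
    have "card A = Suc (card ?A0)" using Aeq fin by (metis card_insert_disjoint Diff_iff singletonI)
    moreover have "outdeg (Suc (Suc p)) A = outdeg p ?A0"
      using outdeg_free[OF AQ] outdeg_free[OF A0Q] free_insert[OF sub] Aeq by simp
    ultimately have "?A0 \<in> ?S" using A A0Q by (auto simp: QPr_def)
    thus "A \<in> insert (Suc (Suc p)) ` ?S" using Aeq by blast
  next
    fix A assume "A \<in> insert (Suc (Suc p)) ` ?S"
    then obtain A0 where A0: "A0 \<in> ?S" and Aeq: "A = insert (Suc (Suc p)) A0" by blast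
    have A0Q: "A0 \<in> QP p" and c: "int (card A0) = r - 1" and o: "int (outdeg p A0) = d"
      using A0 by (auto simp: QPr_def)
    have sub: "A0 \<subseteq> {1..p}" using QP_sub[OF A0Q] .
    have AQ: "A \<in> QP (Suc (Suc p))" using A0Q sub unfolding Aeq QP_def by auto
    have fin: "finite A0" using sub finite_subset by blast
    have nn: "Suc (Suc p) \<notin> A0" using sub by auto
    have "card A = Suc (card A0)" using Aeq fin nn by simp
    moreover have "outdeg (Suc (Suc p)) A = outdeg p A0"
      using outdeg_free[OF AQ] outdeg_free[OF A0Q] free_insert[OF sub] Aeq by simp
    ultimately show "A \<in> {A \<in> QP (Suc (Suc p)). int (card A) = r \<and> int (outdeg (Suc (Suc p)) A) = d \<and> Suc (Suc p) \<in> A}"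
      using AQ c o Aeq by auto
  qed
  moreover have "inj_on (insert (Suc (Suc p))) ?S"
  proof (rule inj_onI)
    fix X Y assume "X \<in> ?S" "Y \<in> ?S" "insert (Suc (Suc p)) X = insert (Suc (Suc p)) Y"
    moreover have "Suc (Suc p) \<notin> X" "Suc (Suc p) \<notin> Y" using \<open>X \<in> ?S\<close> \<open>Y \<in> ?S\<close>
      by (auto simp: QPr_def QP_def)
    ultimately show "X = Y" by (metis insert_ident)
  qed
  ultimately show ?thesis unfolding Fin_def qd_def by (simp add: card_image)
qed

lemma free_Suc:
  assumes "A \<subseteq> {1..p}"
  shows "free (Suc p) A = free p A \<union> (if p \<in> A then {} else {Suc p})"
proof (rule set_eqI)
  fix x show "x \<in> free (Suc p) A \<longleftrightarrow> x \<in> free p A \<union> (if p \<in> A then {} else {Suc p})"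
  proof (cases "x = Suc p")
    case True thus ?thesis using assms by (auto simp: free_def)
  next
    case False thus ?thesis using assms by (auto simp: free_def le_Suc_eq)
  qed
qed

lemma Fout_rec: "Fout (Suc p) r d = Fin p r d + Fout p r (d - 1)"
proof -
  have e: "{A \<in> QP (Suc p). int (card A) = r \<and> int (outdeg (Suc p) A) = d \<and> Suc p \<notin> A}
    = {A \<in> QP p. int (card A) = r \<and> int (outdeg p A) = d \<and> p \<in> A} \<union>
      {A \<in> QP p. int (card A) = r \<and> int (outdeg p A) = d - 1 \<and> p \<notin> A}"
  proof -
    have key: "A \<in> QP p \<Longrightarrow> int (outdeg (Suc p) A) = int (outdeg p A) + (if p \<in> A then 0 else 1)" for A
    proof -
      assume AQ: "A \<in> QP p"
      have sub: "A \<subseteq> {1..p}" using QP_sub[OF AQ] .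
      have AQ': "A \<in> QP (Suc p)" using AQ by (auto simp: QP_def)
      have fin: "finite (free p A)" by (simp add: free_def)
      have nin: "Suc p \<notin> free p A" by (simp add: free_def)
      show ?thesis using outdeg_free[OF AQ] outdeg_free[OF AQ'] free_Suc[OF sub] fin nin by auto
    qed
    have QQ: "(A \<in> QP (Suc p) \<and> Suc p \<notin> A) = (A \<in> QP p)" for A
      by (auto simp: QP_def le_Suc_eq)
    show ?thesis
    proof (rule set_eqI)
      fix A
      show "A \<in> {A \<in> QP (Suc p). int (card A) = r \<and> int (outdeg (Suc p) A) = d \<and> Suc p \<notin> A} \<longleftrightarrow>
        A \<in> {A \<in> QP p. int (card A) = r \<and> int (outdeg p A) = d \<and> p \<in> A} \<union>
      {A \<in> QP p. int (card A) = r \<and> int (outdeg p A) = d - 1 \<and> p \<notin> A}"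
      proof (cases "A \<in> QP p")
        case True
        then show ?thesis using key[OF True] QQ[of A] by (cases "p \<in> A") auto
      next
        case False
        then show ?thesis using QQ[of A] by auto
      qed
    qed
  qed
  show ?thesis unfolding Fout_def Fin_def e
    by (rule card_Un_disjoint) (auto intro: finite_subset[OF _ finite_QP])
qed

lemma QP0: "QP 0 = {{}}" by (auto simp: QP_def)

lemma Fin0: "Fin 0 r d = 0" by (simp add: Fin_def QP0)
lemma Fout0: "Fout 0 r d = (if r = 0 \<and> d = 0 then 1 else 0)"
proof -
  have "outdeg 0 {} = 0" by (simp add: outdeg_def)
  hence "{A \<in> QP 0. int (card A) = r \<and> int (outdeg 0 A) = d \<and> 0 \<notin> A} = (if r = 0 \<and> d = 0 then {{}} else {})"
    by (auto simp: QP0)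
  thus ?thesis by (simp add: Fout_def)
qed
lemma Fin1: "Fin 1 r d = (if r = 1 \<and> d = 0 then 1 else 0)"
proof -
  have h1: "{A \<in> QP 1. 1 \<in> A} = {{1}}" by (auto simp: QP_def)
  have o: "outdeg 1 {1} = 0"
  proof -
    have "{1::nat} \<in> QP 1" by (auto simp: QP_def)
    moreover have "free 1 {1} = {}" by (auto simp: free_def)
    ultimately show ?thesis using outdeg_free by simp
  qed
  have e: "{A \<in> QP 1. int (card A) = r \<and> int (outdeg 1 A) = d \<and> 1 \<in> A}
     = {A \<in> {{1}}. int (card A) = r \<and> int (outdeg 1 A) = d}" using h1 by blast
  have e2: "{A \<in> {{1::nat}}. int (card A) = r \<and> int (outdeg 1 A) = d}
     = (if r = 1 \<and> d = 0 then {{1}} else {})" using o by auto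
  show ?thesis unfolding Fin_def e e2 by simp
qed

lemma Fin1': "Fin (Suc 0) r d = (if r = 1 \<and> d = 0 then 1 else 0)" using Fin1 by simp

lemma qd0: "qd 0 r d = (if r = 0 \<and> d = 0 then 1 else 0)"
  by (simp add: qd_split Fin0 Fout0)
lemma qd1: "qd 1 r d = (if r = 1 \<and> d = 0 then 1 else 0) + (if r = 0 \<and> d = 1 then 1 else 0)"
proof -
  have "qd 1 r d = Fin 1 r d + Fout (Suc 0) r d" using qd_split[of 1 r d] by simp
  also have "Fout (Suc 0) r d = Fin 0 r d + Fout 0 r (d - 1)" by (rule Fout_rec)
  finally show ?thesis by (simp add: Fin1' Fin0 Fout0)
qed
lemma qd2: "qd 2 r d = 2 * (if r = 1 \<and> d = 0 then 1 else 0) + (if r = 0 \<and> d = 2 then 1 else 0)"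
proof -
  have two: "(2::nat) = Suc (Suc 0)" by simp
  have a: "qd 2 r d = Fin (Suc (Suc 0)) r d + Fout (Suc (Suc 0)) r d" unfolding two by (rule qd_split)
  have b: "Fin (Suc (Suc 0)) r d = qd 0 (r - 1) d" by (rule Fin_rec)
  have c: "Fout (Suc (Suc 0)) r d = Fin (Suc 0) r d + Fout (Suc 0) r (d - 1)" by (rule Fout_rec)
  have e: "Fout (Suc 0) r (d - 1) = Fin 0 r (d-1) + Fout 0 r (d - 1 - 1)" by (rule Fout_rec)
  have f: "qd 0 (r - 1) d = (if r = 1 \<and> d = 0 then 1 else 0)" unfolding qd0 by auto
  have g: "Fout 0 r (d - 1 - 1) = (if r = 0 \<and> d = 2 then 1 else 0)" unfolding Fout0 by auto
  show ?thesis unfolding a b c e f g Fin1' Fin0 by simp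
qed

lemma qd_rec: "qd (Suc (Suc (Suc p))) r d + qd p (r - 1) (d - 1)
   = qd (Suc p) (r - 1) d + qd p (r - 1) d + qd (Suc (Suc p)) r (d - 1)"
proof -
  have 1: "qd (Suc (Suc (Suc p))) r d = Fin (Suc (Suc (Suc p))) r d + Fout (Suc (Suc (Suc p))) r d"
    by (rule qd_split)
  have 2: "Fin (Suc (Suc (Suc p))) r d = qd (Suc p) (r - 1) d" by (rule Fin_rec)
  have 3: "Fout (Suc (Suc (Suc p))) r d = Fin (Suc (Suc p)) r d + Fout (Suc (Suc p)) r (d - 1)"
    by (rule Fout_rec)
  have 4: "Fin (Suc (Suc p)) r d = qd p (r - 1) d" by (rule Fin_rec)
  have 5: "qd (Suc (Suc p)) r (d - 1) = Fin (Suc (Suc p)) r (d - 1) + Fout (Suc (Suc p)) r (d - 1)"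
    by (rule qd_split)
  have 6: "Fin (Suc (Suc p)) r (d - 1) = qd p (r - 1) (d - 1)" by (rule Fin_rec)
  show ?thesis unfolding 1 2 3 4 5 6 by simp
qed


definition bi :: "int \<Rightarrow> int \<Rightarrow> nat" where
  "bi x y = (if 0 \<le> y \<and> y \<le> x then nat x choose nat y else 0)"
definition cmp :: "int \<Rightarrow> int \<Rightarrow> nat" where
  "cmp m k = (if m = 0 \<and> k = 0 then 1 else if 1 \<le> k \<and> k \<le> m then nat (m - 1) choose nat (k - 1) else 0)"
definition G :: "nat \<Rightarrow> int \<Rightarrow> int \<Rightarrow> nat" where
  "G n r d = bi (r + 1) (int n - 2 * r + 1 - d) * cmp (int n - 2 * r + 1) (int n - 2 * r + 1 - d)"

lemma int_ge1_cases: "1 \<le> (m::int) \<Longrightarrow> \<exists>M. m = int M + 1"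
  by (rule exI[of _ "nat (m - 1)"]) simp

lemma bi_nat: "bi (int a) (int b) = a choose b"
  by (auto simp: bi_def binomial_eq_0)

lemma bi_neg: "y < 0 \<Longrightarrow> bi x y = 0" by (simp add: bi_def)
lemma bi_negx: "x < 0 \<Longrightarrow> bi x y = 0" by (simp add: bi_def)

lemma bi_pascal: assumes "0 \<le> r" shows "bi (r + 1) k = bi r k + bi r (k - 1)"
proof -
  obtain R where R: "r = int R" using assms nonneg_int_cases by blast
  show ?thesis
  proof (cases "k < 0")
    case True thus ?thesis by (simp add: bi_neg)
  next
    case False
    show ?thesis
    proof (cases "k = 0")
      case True thus ?thesis by (simp add: bi_def R)
    next
      case False
      have "0 \<le> k - 1" using False \<open>\<not> k < 0\<close> by simp
      then obtain K where "k - 1 = int K" using nonneg_int_cases by blast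
      hence K: "k = int K + 1" by simp
      have "bi (r + 1) k = bi (int (Suc R)) (int (Suc K))" using R K by (simp add: add.commute)
      also have "\<dots> = Suc R choose Suc K" by (rule bi_nat)
      also have "\<dots> = (R choose K) + (R choose Suc K)" by simp
      also have "R choose K = bi r (k - 1)" using R K bi_nat by simp
      also have "R choose Suc K = bi r k" using R K bi_nat[of R "Suc K"] by (simp add: add.commute)
      finally show ?thesis by simp
    qed
  qed
qed

lemma cmp_nat: "cmp (int M + 1) (int K + 1) = M choose K"
proof (cases "K \<le> M")
  case True thus ?thesis by (simp add: cmp_def)
next
  case False
  have c1: "(int M + 1 = 0 \<and> int K + 1 = 0) = False" by simp
  have c2: "(1 \<le> int K + 1 \<and> int K + 1 \<le> int M + 1) = False" using False by simp
  have "cmp (int M + 1) (int K + 1) = 0" unfolding cmp_def c1 c2 if_False ..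
  moreover have "M choose K = 0" using False by (simp add: binomial_eq_0)
  ultimately show ?thesis by simp
qed

lemma cmp_pascal: assumes "1 \<le> m" "1 \<le> k" shows "cmp m k = cmp (m - 1) (k - 1) + cmp (m - 1) k"
proof -
  obtain M where M: "m = int M + 1" using int_ge1_cases[OF assms(1)] by blast
  obtain K where K: "k = int K + 1" using int_ge1_cases[OF assms(2)] by blast
  show ?thesis
  proof (cases M)
    case 0
    then show ?thesis using M K by (auto simp: cmp_def)
  next
    case (Suc M')
    show ?thesis
    proof (cases K)
      case 0
      then show ?thesis using M K Suc by (auto simp: cmp_def)
    next
      case (Suc K')
      have mm: "m = int (Suc M') + 1" "m - 1 = int M' + 1" using M \<open>M = Suc M'\<close> by simp_all
      have kk: "k = int (Suc K') + 1" "k - 1 = int K' + 1" using K Suc by simp_all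
      have "cmp m k = Suc M' choose Suc K'" unfolding mm(1) kk(1) by (rule cmp_nat)
      also have "\<dots> = (M' choose K') + (M' choose Suc K')" by simp
      also have "M' choose K' = cmp (m - 1) (k - 1)" unfolding mm(2) kk(2) by (rule cmp_nat[symmetric])
      also have "M' choose Suc K' = cmp (m - 1) k" unfolding mm(2) kk(1) by (rule cmp_nat[symmetric])
      finally show ?thesis .
    qed
  qed
qed

lemma H_ident:
  assumes "4 \<le> m + 2 * r"
  shows "bi (r+1) k * cmp m k + bi r k * cmp (m - 1) k
       = bi r k * cmp m k + bi r (k - 1) * cmp (m - 1) (k - 1) + bi (r + 1) k * cmp (m - 1) k"
proof (cases "0 \<le> r")
  case True
  have key: "bi r (k - 1) * cmp m k = bi r (k - 1) * (cmp (m - 1) (k - 1) + cmp (m - 1) k)"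
  proof (cases "k \<le> 0")
    case True thus ?thesis by (simp add: bi_neg)
  next
    case False
    show ?thesis
    proof (cases "m \<le> 0")
      case True thus ?thesis using False by (auto simp: cmp_def)
    next
      case False
      thus ?thesis using \<open>\<not> k \<le> 0\<close> cmp_pascal[of m k] by simp
    qed
  qed
  show ?thesis using key unfolding bi_pascal[OF True] by (simp add: algebra_simps)
next
  case False
  hence "bi r k = 0" "bi r (k - 1) = 0" by (auto simp: bi_negx)
  moreover have z: "bi (r + 1) k * cmp m k = 0" "bi (r + 1) k * cmp (m - 1) k = 0"
  proof -
    have "r + 1 < 0 \<or> r = -1" using False by auto
    thus "bi (r + 1) k * cmp m k = 0" "bi (r + 1) k * cmp (m - 1) k = 0"
      using assms by (auto simp: bi_def cmp_def)
  qed
  ultimately show ?thesis by (simp only: z mult_0 add_0)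
qed

lemma G_rec: "G (Suc (Suc (Suc p))) r d + G p (r - 1) (d - 1)
   = G (Suc p) (r - 1) d + G p (r - 1) d + G (Suc (Suc p)) r (d - 1)"
proof -
  define m where "m = int p - 2 * r + 4"
  define k where "k = m - d"
  have "4 \<le> m + 2 * r" unfolding m_def by simp
  note h = H_ident[OF this, of k]
  have e1: "G (Suc (Suc (Suc p))) r d = bi (r+1) k * cmp m k" unfolding G_def m_def k_def
    by (simp add: algebra_simps)
  have e2: "G p (r - 1) (d - 1) = bi r k * cmp (m - 1) k" unfolding G_def m_def k_def
    by (simp add: algebra_simps)
  have e3: "G (Suc p) (r - 1) d = bi r k * cmp m k" unfolding G_def m_def k_def
    by (simp add: algebra_simps)
  have e4: "G p (r - 1) d = bi r (k - 1) * cmp (m - 1) (k - 1)" unfolding G_def m_def k_def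
    by (simp add: algebra_simps)
  have e5: "G (Suc (Suc p)) r (d - 1) = bi (r + 1) k * cmp (m - 1) k" unfolding G_def m_def k_def
    by (simp add: algebra_simps)
  show ?thesis unfolding e1 e2 e3 e4 e5 using h by simp
qed

lemma G0: "G 0 r d = (if r = 0 \<and> d = 0 then 1 else 0)"
  unfolding G_def bi_def cmp_def by (auto; presburger)
lemma G1: "G 1 r d = (if r = 1 \<and> d = 0 then 1 else 0) + (if r = 0 \<and> d = 1 then 1 else 0)"
  unfolding G_def bi_def cmp_def by (auto; presburger)
lemma G2: "G 2 r d = 2 * (if r = 1 \<and> d = 0 then 1 else 0) + (if r = 0 \<and> d = 2 then 1 else 0)"
  unfolding G_def bi_def cmp_def by (auto; presburger)

lemma qd_G: "qd n r d = G n r d"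
proof (induction n arbitrary: r d rule: less_induct)
  case (less n)
  show ?case
  proof (cases "n \<le> 2")
    case True
    then consider "n = 0" | "n = 1" | "n = 2" by linarith
    thus ?thesis
    proof cases
      case 1 thus ?thesis using qd0 G0 by metis
    next
      case 2 thus ?thesis using qd1 G1 by metis
    next
      case 3 thus ?thesis using qd2 G2 by metis
    qed
  next
    case False
    then obtain p where p: "n = Suc (Suc (Suc p))" by (metis add_2_eq_Suc less_natE not_le_imp_less numeral_2_eq_2)
    have "qd n r d + qd p (r - 1) (d - 1) = G n r d + G p (r - 1) (d - 1)"
      unfolding p qd_rec G_rec using less p by simp
    moreover have "qd p (r - 1) (d - 1) = G p (r - 1) (d - 1)" using less p by simp
    ultimately show ?thesis by simp
  qed
qed


lemma finite_QPr: "finite (QPr n r)"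
  unfolding QPr_def using finite_QP by (rule finite_subset[rotated]) auto

lemma sum_qd_card: "finite D \<Longrightarrow> (\<Sum>d\<in>D. qd n r d) = card (\<Union>d\<in>D. {A \<in> QPr n r. int (outdeg n A) = d})"
  unfolding qd_def
  by (rule card_UN_disjoint[symmetric]) (auto intro: finite_subset[OF _ finite_QPr])

lemma sum_qd_le: "finite D \<Longrightarrow> (\<Sum>d\<in>D. qd n r d) \<le> q n r"
  unfolding sum_qd_card q_def by (rule card_mono[OF finite_QPr]) auto

lemma sum_qd_eq: "q n r = (\<Sum>d\<in>{0..int n}. qd n r d)"
proof -
  have "(\<Union>d\<in>{0..int n}. {A \<in> QPr n r. int (outdeg n A) = d}) = QPr n r"
    using outdeg_le by (auto simp: QPr_def)
  thus ?thesis unfolding sum_qd_card[OF finite_atLeastAtMost_int] q_def by simp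
qed

definition T :: "nat \<Rightarrow> nat \<Rightarrow> nat \<Rightarrow> nat" where
  "T a M k = (if k = 0 then 0 else (a choose k) * (M choose (k - 1)))"

lemma qd_T:
  assumes r: "0 \<le> r" and m: "1 \<le> int n - 2 * r + 1"
  shows "qd n r d = T (nat (r + 1)) (nat (int n - 2 * r)) (nat (int n - 2 * r + 1 - d))"
proof -
  define m where "m = int n - 2 * r + 1"
  have G: "qd n r d = bi (r + 1) (m - d) * cmp m (m - d)" unfolding qd_G G_def m_def by simp
  show ?thesis
  proof (cases "m - d \<le> 0")
    case True
    hence "bi (r + 1) (m - d) * cmp m (m - d) = 0"
      using m by (cases "m - d = 0") (auto simp: bi_neg cmp_def m_def)
    moreover have "nat (int n - 2 * r + 1 - d) = 0" using True m_def by simp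
    ultimately show ?thesis using G by (simp add: T_def)
  next
    case False
    obtain R where R: "r = int R" using r nonneg_int_cases by blast
    obtain K where K: "m - d = int K + 1" using False int_ge1_cases[of "m - d"] by auto
    obtain M where M: "m = int M + 1" using m int_ge1_cases[of m] unfolding m_def by auto
    have "bi (r + 1) (m - d) = Suc R choose Suc K" using R K bi_nat[of "Suc R" "Suc K"] by (simp add: add.commute)
    moreover have "cmp m (m - d) = M choose K" unfolding K unfolding M by (rule cmp_nat)
    moreover have "nat (r + 1) = Suc R" "nat (int n - 2 * r) = M" "nat (int n - 2 * r + 1 - d) = Suc K"
      using R M K m_def by auto
    ultimately show ?thesis using G by (simp add: T_def)
  qed
qed

lemma binom_step: "Suc k * (n choose Suc k) = (n - k) * (n choose k)"
  using binomial_absorption[of k n] binomial_absorb_comp[of n k] by simp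

lemma T_step: "1 \<le> k \<Longrightarrow> T a M (k + 1) * (k + 1) * k = T a M k * (a - k) * (M + 1 - k)"
proof -
  assume k: "1 \<le> k"
  then obtain K where K: "k = Suc K" by (cases k) auto
  have 1: "(k + 1) * (a choose (k + 1)) = (a - k) * (a choose k)" using binom_step[of k a] by simp
  have 2: "k * (M choose k) = (M + 1 - k) * (M choose (k - 1))" using binom_step[of K M] K by simp
  have t1: "T a M (k + 1) = (a choose (k + 1)) * (M choose k)" using K by (simp add: T_def)
  have t2: "T a M k = (a choose k) * (M choose (k - 1))" using K by (simp add: T_def)
  have "T a M (k + 1) * (k + 1) * k = ((k + 1) * (a choose (k + 1))) * (k * (M choose k))"
    unfolding t1 by (simp only: mult_ac)
  also have "\<dots> = ((a - k) * (a choose k)) * ((M + 1 - k) * (M choose (k - 1)))" unfolding 1 2 ..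
  also have "\<dots> = T a M k * (a - k) * (M + 1 - k)" unfolding t2 by (simp only: mult_ac)
  finally show ?thesis .
qed

lemma T_pos: "0 < T a M k \<Longrightarrow> 1 \<le> k \<and> k \<le> a \<and> k \<le> M + 1"
  by (auto simp: T_def split: if_splits)

lemma q_T_sum:
  assumes r: "0 \<le> r" and m: "1 \<le> int n - 2 * r + 1"
  shows "q n r = (\<Sum>k\<in>{1..nat (int n - 2 * r + 1)}. T (nat (r + 1)) (nat (int n - 2 * r)) k)"
proof -
  define m where "m = int n - 2 * r + 1"
  define f where "f = T (nat (r + 1)) (nat (int n - 2 * r))"
  have qd: "qd n r d = f (nat (m - d))" for d unfolding f_def m_def using qd_T[OF r m] by simp
  have "q n r = (\<Sum>d\<in>{0..int n}. f (nat (m - d)))" unfolding sum_qd_eq qd ..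
  also have "\<dots> = (\<Sum>d\<in>{0..m - 1}. f (nat (m - d)))"
  proof (rule sum.mono_neutral_right)
    show "{0..m - 1} \<subseteq> {0..int n}" using r m_def by auto
    show "\<forall>i\<in>{0..int n} - {0..m - 1}. f (nat (m - i)) = 0"
      by (auto simp: f_def T_def)
  qed simp
  also have "\<dots> = (\<Sum>k\<in>{1..nat m}. f k)"
    by (rule sum.reindex_bij_witness[of _ "\<lambda>k. m - int k" "\<lambda>d. nat (m - d)"]) (use m m_def in auto)
  finally show ?thesis unfolding f_def m_def .
qed


context
  fixes f :: "nat \<Rightarrow> nat" and a b k0 :: nat
  assumes step: "\<And>k. 1 \<le> k \<Longrightarrow> f (k + 1) * (k + 1) * k = f k * (a - k) * (b - k)"
    and fmax: "\<And>k. f k \<le> f k0" and fpos: "0 < f k0" and k01: "1 \<le> k0"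
begin

lemma at_mode: "(a - k0) * (b - k0) \<le> (k0 + 1) * k0"
proof -
  have "f k0 * ((a - k0) * (b - k0)) = f (k0 + 1) * ((k0 + 1) * k0)"
    using step[OF k01] by (simp only: mult.assoc)
  also have "\<dots> \<le> f k0 * ((k0 + 1) * k0)" using fmax[of "k0 + 1"] by (rule mult_right_mono) simp
  finally show ?thesis using fpos by simp
qed

lemma below_mode: assumes "2 \<le> k0" shows "k0 * (k0 - 1) \<le> (a - (k0 - 1)) * (b - (k0 - 1))"
proof -
  have e: "k0 - 1 + 1 = k0" using assms by simp
  have "f k0 * (k0 * (k0 - 1)) = f (k0 - 1) * ((a - (k0 - 1)) * (b - (k0 - 1)))"
    using step[of "k0 - 1"] assms e by (simp only: mult.assoc)
  also have "\<dots> \<le> f k0 * ((a - (k0 - 1)) * (b - (k0 - 1)))" using fmax[of "k0 - 1"] by (rule mult_right_mono) simp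
  finally show ?thesis using fpos by simp
qed

lemma up_step: assumes "k0 + j \<le> k" shows "f (k + 1) * (k0 + j + 1) \<le> f k * (k0 + 1)"
proof -
  have k1: "1 \<le> k" using assms k01 by simp
  have A: "(a - k) * (b - k) \<le> (a - k0) * (b - k0)" using assms by (intro mult_le_mono) auto
  have B: "(k0 + j + 1) * k0 \<le> (k + 1) * k" using assms by (intro mult_le_mono) auto
  have "f (k + 1) * ((k0 + j + 1) * k0) \<le> f (k + 1) * ((k + 1) * k)" using B by simp
  also have "\<dots> = f k * ((a - k) * (b - k))" using step[OF k1] by (simp only: mult.assoc)
  also have "\<dots> \<le> f k * ((k0 + 1) * k0)" using le_trans[OF A at_mode] by simp
  finally have "(f (k + 1) * (k0 + j + 1)) * k0 \<le> (f k * (k0 + 1)) * k0" by (simp only: mult.assoc)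
  moreover have "0 < k0" using k01 by simp
  ultimately show ?thesis by (auto simp only: mult_le_cancel2)
qed

lemma down_step: assumes "1 \<le> k" "k + j + 1 \<le> k0" shows "f k * k0 \<le> f (k + 1) * (k0 - j)"
proof -
  have k2: "2 \<le> k0" using assms by simp
  have A: "(a - (k0 - 1)) * (b - (k0 - 1)) \<le> (a - k) * (b - k)" using assms by (intro mult_le_mono) auto
  have B: "(k + 1) * k \<le> (k0 - j) * (k0 - 1)" using assms by (intro mult_le_mono) auto
  have "f k * (k0 * (k0 - 1)) \<le> f k * ((a - k) * (b - k))" using le_trans[OF below_mode[OF k2] A] by simp
  also have "\<dots> = f (k + 1) * ((k + 1) * k)" using step[OF assms(1)] by (simp only: mult.assoc)
  also have "\<dots> \<le> f (k + 1) * ((k0 - j) * (k0 - 1))" using B by simp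
  finally have "(f k * k0) * (k0 - 1) \<le> (f (k + 1) * (k0 - j)) * (k0 - 1)" by (simp only: mult.assoc)
  moreover have "0 < k0 - 1" using k2 by simp
  ultimately show ?thesis by (auto simp only: mult_le_cancel2)
qed

lemma upper_sum: assumes "k0 + j \<le> L"
  shows "j * (\<Sum>k\<in>{k0 + j..L}. f k) + (k0 + 1) * f L \<le> (k0 + j + 1) * f (k0 + j)"
  using assms
proof (induction L rule: dec_induct)
  case base
  then show ?case by (simp add: algebra_simps)
next
  case (step L)
  have "j * (\<Sum>k\<in>{k0 + j..Suc L}. f k) + (k0 + 1) * f (Suc L)
      = j * (\<Sum>k\<in>{k0 + j..L}. f k) + (k0 + j + 1) * f (L + 1)"
    using step.hyps by (simp add: algebra_simps)
  also have "\<dots> \<le> j * (\<Sum>k\<in>{k0 + j..L}. f k) + (k0 + 1) * f L"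
    using up_step[of j L] step.hyps by (simp add: mult.commute)
  finally show ?case using step.IH by linarith
qed

lemma lower_sum: "K + j + 1 \<le> k0 \<Longrightarrow> j * (\<Sum>k\<in>{1..K}. f k) \<le> (k0 - j) * f (K + 1)"
proof (induction K)
  case 0
  then show ?case by simp
next
  case (Suc K)
  have "j * (\<Sum>k\<in>{1..Suc K}. f k) = j * (\<Sum>k\<in>{1..K}. f k) + j * f (K + 1)" by (simp add: distrib_left)
  also have "\<dots> \<le> (k0 - j) * f (K + 1) + j * f (K + 1)" using Suc by simp
  also have "\<dots> = f (K + 1) * k0" using Suc.prems by (simp add: algebra_simps)
  also have "\<dots> \<le> f (Suc K + 1) * (k0 - j)" using down_step[of "K + 1" j] Suc.prems by simp
  finally show ?case by (simp add: mult.commute)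
qed

lemma lo_nat: assumes j: "1 \<le> j"
  shows "j * (\<Sum>k\<in>{1..L}. f k) \<le> (2 * k0 + j + 1 + 2 * j * j) * f k0"
proof -
  define lo where "lo = {k \<in> {1..L}. k + j + 1 \<le> k0}"
  define up where "up = {k \<in> {1..L}. k0 + j \<le> k}"
  define mi where "mi = {k \<in> {1..L}. \<not> k + j + 1 \<le> k0 \<and> \<not> k0 + j \<le> k}"
  have split: "{1..L} = lo \<union> (mi \<union> up)" unfolding lo_def mi_def up_def by auto
  have sum_split: "(\<Sum>k\<in>{1..L}. f k) = sum f lo + (sum f mi + sum f up)"
    unfolding split by (subst sum.union_disjoint; (subst sum.union_disjoint)?)
       (auto simp: lo_def mi_def up_def)
  have LO: "j * sum f lo \<le> k0 * f k0"
  proof (cases "j + 1 \<le> k0")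
    case True
    have ls: "lo \<subseteq> {1..k0 - j - 1}" unfolding lo_def by auto
    have "sum f lo \<le> (\<Sum>k\<in>{1..k0 - j - 1}. f k)" by (rule sum_mono2[OF finite_atLeastAtMost ls]) auto
    hence "j * sum f lo \<le> j * (\<Sum>k\<in>{1..k0 - j - 1}. f k)" by simp
    also have "\<dots> \<le> (k0 - j) * f (k0 - j - 1 + 1)" using True by (intro lower_sum) simp
    also have "\<dots> \<le> k0 * f k0" using fmax by (intro mult_le_mono) auto
    finally show ?thesis .
  next
    case False
    hence "lo = {}" unfolding lo_def by auto
    thus ?thesis by simp
  qed
  have UP: "j * sum f up \<le> (k0 + j + 1) * f k0"
  proof (cases "k0 + j \<le> L")
    case True
    have "up = {k0 + j..L}" unfolding up_def using k01 by auto
    hence "j * sum f up \<le> (k0 + j + 1) * f (k0 + j)" using upper_sum[OF True] by simp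
    also have "\<dots> \<le> (k0 + j + 1) * f k0" using fmax[of "k0 + j"] by (rule mult_left_mono) simp
    finally show ?thesis .
  next
    case False
    hence "up = {}" unfolding up_def by auto
    thus ?thesis by simp
  qed
  have MI: "sum f mi \<le> 2 * j * f k0"
  proof -
    have sub: "mi \<subseteq> {k0 - j..<k0 + j}" unfolding mi_def by auto
    have "card mi \<le> card {k0 - j..<k0 + j}" by (rule card_mono[OF _ sub]) simp
    also have "\<dots> \<le> 2 * j" by simp
    finally have c: "card mi \<le> 2 * j" .
    have "sum f mi \<le> card mi * f k0" using sum_bounded_above[of mi f "f k0"] fmax by simp
    also have "\<dots> \<le> 2 * j * f k0" using c by simp
    finally show ?thesis .
  qed
  have "j * (\<Sum>k\<in>{1..L}. f k) = j * sum f lo + j * sum f mi + j * sum f up"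
    unfolding sum_split by (simp add: algebra_simps)
  also have "\<dots> \<le> k0 * f k0 + j * (2 * j * f k0) + (k0 + j + 1) * f k0"
    using LO UP MI by (intro add_mono) auto
  also have "\<dots> = (2 * k0 + j + 1 + 2 * j * j) * f k0" by (simp add: algebra_simps)
  finally show ?thesis .
qed

lemma lo_real: assumes N: "1 \<le> N" "real k0 \<le> N"
  shows "real (\<Sum>k\<in>{1..L}. f k) \<le> 8 * sqrt N * real (f k0)"
proof -
  define j where "j = nat \<lceil>sqrt N\<rceil>"
  have sN: "1 \<le> sqrt N" using N by simp
  have j1: "sqrt N \<le> real j" unfolding j_def by linarith
  have j2: "real j \<le> sqrt N + 1" unfolding j_def using sN by linarith
  have jp: "1 \<le> j" using j1 sN by linarith
  have nat_ineq: "j * (\<Sum>k\<in>{1..L}. f k) \<le> (2 * k0 + j + 1 + 2 * j * j) * f k0"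
    by (rule lo_nat[OF jp])
  hence "real (j * (\<Sum>k\<in>{1..L}. f k)) \<le> real ((2 * k0 + j + 1 + 2 * j * j) * f k0)"
    by (simp only: of_nat_le_iff)
  hence R: "real j * real (\<Sum>k\<in>{1..L}. f k) \<le> (2 * real k0 + real j + 1 + 2 * real j * real j) * real (f k0)"
    by (simp only: of_nat_mult of_nat_add of_nat_1 of_nat_numeral)
  have "2 * real k0 + real j + 1 + 2 * real j * real j \<le> 8 * sqrt N * real j"
  proof -
    have a1: "2 * real k0 \<le> 2 * sqrt N * real j"
    proof -
      have "real k0 \<le> sqrt N * sqrt N" using N by simp
      also have "\<dots> \<le> sqrt N * real j" using j1 sN by (intro mult_left_mono) auto
      finally show ?thesis by simp
    qed
    have "1 * real j \<le> sqrt N * real j" by (rule mult_right_mono[OF sN]) simp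
    moreover have "1 \<le> real j" using jp by simp
    ultimately have a2: "real j + 1 \<le> 2 * sqrt N * real j" by linarith
    have a3: "2 * real j * real j \<le> 4 * sqrt N * real j"
    proof -
      have "real j \<le> 2 * sqrt N" using j2 sN by linarith
      hence "real j * real j \<le> 2 * sqrt N * real j" by (intro mult_right_mono) auto
      thus ?thesis by linarith
    qed
    show ?thesis using a1 a2 a3 by linarith
  qed
  hence "(2 * real k0 + real j + 1 + 2 * real j * real j) * real (f k0) \<le> (8 * sqrt N * real j) * real (f k0)"
    by (rule mult_right_mono) simp
  hence "real j * real (\<Sum>k\<in>{1..L}. f k) \<le> real j * (8 * sqrt N * real (f k0))"
    using R by (simp add: algebra_simps)
  moreover have "0 < real j" using jp by simp
  ultimately show ?thesis by simp
qed

end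


lemma core_ineq:
  fixes n k0 a b i j :: real
  assumes n1: "1 \<le> n" and k0n: "n / 10 \<le> k0" and ka: "k0 \<le> a" and kb: "k0 \<le> b"
    and an: "a \<le> n + 1" and bn: "b \<le> n + 1"
    and mode: "(a - k0) * (b - k0) \<le> (k0 + 1) * k0" and i0: "0 \<le> i" and ij: "i \<le> j"
    and jn: "1500 * j \<le> n"
  shows "(a - (k0 - i)) * (b - (k0 - i)) \<le> (1 + 1500 * j / n) * ((k0 - i + 1) * (k0 - i))"
proof -
  define \<rho> where "\<rho> = 1 + 1500 * j / n"
  define K where "K = (k0 + 1) * k0"
  have npos: "0 < n" using n1 by simp
  have j0: "0 \<le> j" using i0 ij by simp
  have jle: "j \<le> n" using jn j0 by simp
  have k0pos: "0 \<le> k0" using k0n npos by simp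
  have e1: "(a - (k0 - i)) * (b - (k0 - i)) = (a - k0) * (b - k0) + i * ((a - k0) + (b - k0)) + i * i"
    by (simp add: algebra_simps)
  have e2: "(k0 - i + 1) * (k0 - i) = K - i * (2 * k0 + 1) + i * i"
    unfolding K_def by (simp add: algebra_simps)
  have h1: "i * ((a - k0) + (b - k0)) \<le> i * (2 * n + 2)"
    using an bn k0pos i0 by (intro mult_left_mono) auto
  have h2: "i * (6 * n + 8 + i) \<le> j * (15 * n)"
    using ij i0 jle n1 by (intro mult_mono) auto
  have kk: "(n / 10) * (n / 10) \<le> k0 * k0" using k0n npos by (intro mult_mono) auto
  have Kge: "n * n / 100 \<le> K" unfolding K_def using kk k0pos by (simp add: algebra_simps)
  have r1: "\<rho> - 1 = 1500 * j / n" unfolding \<rho>_def by simp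
  have h3: "15 * n * j \<le> (\<rho> - 1) * K"
  proof -
    have "(1500 * j / n) * (n * n / 100) \<le> (1500 * j / n) * K"
      using Kge j0 npos by (intro mult_left_mono) auto
    moreover have "(1500 * j / n) * (n * n / 100) = 15 * n * j" using npos by (simp add: field_simps)
    ultimately show ?thesis unfolding r1 by simp
  qed
  have rho1: "1 \<le> \<rho>" unfolding \<rho>_def using j0 npos by simp
  have rho2: "\<rho> \<le> 2" unfolding \<rho>_def using jn npos by (simp add: field_simps)
  have h4: "\<rho> * (i * (2 * k0 + 1)) \<le> 2 * (i * (2 * n + 3))"
  proof -
    have x1: "i * (2 * k0 + 1) \<le> i * (2 * n + 3)" using ka an i0 by (intro mult_left_mono) auto
    have x2: "0 \<le> i * (2 * k0 + 1)" using i0 k0pos by simp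
    show ?thesis by (rule mult_mono[OF rho2 x1 _ x2]) simp
  qed
  have h5: "0 \<le> \<rho> * (i * i)" using rho1 i0 by simp
  have "(a - (k0 - i)) * (b - (k0 - i)) \<le> K + i * (2 * n + 2) + i * i"
    using e1 h1 mode unfolding K_def by linarith
  also have "\<dots> \<le> \<rho> * K - \<rho> * (i * (2 * k0 + 1)) + \<rho> * (i * i)"
  proof -
    have "i * (2 * n + 2) + i * i + 2 * (i * (2 * n + 3)) = i * (6 * n + 8 + i)" by (simp add: algebra_simps)
    hence "i * (2 * n + 2) + i * i + 2 * (i * (2 * n + 3)) \<le> (\<rho> - 1) * K" using h2 h3 by (simp add: algebra_simps)
    thus ?thesis using h4 h5 by (simp add: algebra_simps)
  qed
  also have "\<dots> = \<rho> * ((k0 - i + 1) * (k0 - i))" unfolding e2 by (simp add: algebra_simps)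
  finally show ?thesis unfolding \<rho>_def .
qed

context
  fixes f :: "nat \<Rightarrow> nat" and a b k0 :: nat
  assumes step: "\<And>k. 1 \<le> k \<Longrightarrow> f (k + 1) * (k + 1) * k = f k * (a - k) * (b - k)"
    and fmax: "\<And>k. f k \<le> f k0" and fpos: "0 < f k0" and k01: "1 \<le> k0"
    and ka: "k0 \<le> a" and kb: "k0 \<le> b"
begin

lemma at_mode_real: "(real a - real k0) * (real b - real k0) \<le> (real k0 + 1) * real k0"
proof -
  have "f k0 * ((a - k0) * (b - k0)) = f (k0 + 1) * ((k0 + 1) * k0)"
    using step[OF k01] by (simp only: mult.assoc)
  also have "\<dots> \<le> f k0 * ((k0 + 1) * k0)" using fmax[of "k0 + 1"] by (rule mult_right_mono) simp
  finally have "(a - k0) * (b - k0) \<le> (k0 + 1) * k0" using fpos by simp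
  hence "real ((a - k0) * (b - k0)) \<le> real ((k0 + 1) * k0)" by (simp only: of_nat_le_iff)
  moreover have "real ((a - k0) * (b - k0)) = (real a - real k0) * (real b - real k0)"
    by (simp only: of_nat_mult of_nat_diff[OF ka] of_nat_diff[OF kb])
  moreover have "real ((k0 + 1) * k0) = (real k0 + 1) * real k0" by (simp add: algebra_simps)
  ultimately show ?thesis by simp
qed

lemma mode_location:
  fixes n :: real
  assumes n: "10 \<le> n" and an: "n / 5 \<le> real a" and bn: "3 * n / 10 \<le> real b"
  shows "n / 10 \<le> real k0"
proof (rule ccontr)
  assume "\<not> n / 10 \<le> real k0"
  hence k: "real k0 < n / 10" by simp
  have "(n / 10) * (n / 5) < (real a - real k0) * (real b - real k0)"
    using k an bn n by (intro mult_strict_mono) auto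
  also have "\<dots> \<le> (real k0 + 1) * real k0" by (rule at_mode_real)
  also have "\<dots> \<le> (n / 10 + 1) * (n / 10)" using k by (intro mult_mono) auto
  finally show False using n by (simp add: field_simps)
qed

lemma up_bound:
  fixes n :: nat
  assumes n: "1600 \<le> n" and k0n: "real n / 10 \<le> real k0" and an: "a \<le> n + 1" and bn: "b \<le> n + 1"
  shows "sqrt (real n) / 40 * real (f k0) \<le> 3 * real (\<Sum>i\<in>{0..nat \<lfloor>sqrt (real n) / 40\<rfloor>}. f (k0 - i))"
proof -
  define j where "j = nat \<lfloor>sqrt (real n) / 40\<rfloor>"
  define \<rho> where "\<rho> = 1 + 1500 * real j / real n"
  have npos: "0 < real n" using n by simp
  have sn: "40 \<le> sqrt (real n)"
    by (rule real_le_rsqrt) (use n in simp)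
  have sq: "sqrt (real n) * sqrt (real n) = real n" by simp
  have jle: "real j \<le> sqrt (real n) / 40" unfolding j_def using sn by linarith
  have jge: "sqrt (real n) / 40 \<le> real j + 1" unfolding j_def using sn by linarith
  have j1: "1 \<le> j" unfolding j_def using sn by linarith
  have jn: "1500 * real j \<le> real n"
  proof -
    have "1500 * real j \<le> 1500 * (sqrt (real n) / 40)" using jle by simp
    also have "\<dots> = (75 / 2) * sqrt (real n)" by simp
    also have "\<dots> \<le> sqrt (real n) * sqrt (real n)" using sn by (intro mult_right_mono) auto
    finally show ?thesis using sq by simp
  qed
  have jk0: "j + 1 \<le> k0"
  proof -
    have "real j + 1 \<le> sqrt (real n) / 40 + 1" using jle by simp
    also have "\<dots> \<le> sqrt (real n) * sqrt (real n) / 10"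
    proof -
      have "sqrt (real n) * 40 \<le> sqrt (real n) * sqrt (real n)" using sn by (intro mult_left_mono) auto
      thus ?thesis using sn by simp
    qed
    also have "\<dots> \<le> real k0" using k0n sq by simp
    finally show ?thesis by linarith
  qed
  have mode: "(real a - real k0) * (real b - real k0) \<le> (real k0 + 1) * real k0" by (rule at_mode_real)
  have stepr: "real (f (k0 - i + 1)) \<le> \<rho> * real (f (k0 - i))" if i: "1 \<le> i" "i \<le> j" for i
  proof -
    define k where "k = k0 - i"
    have k1: "1 \<le> k" unfolding k_def using i jk0 by simp
    have rk: "real k = real k0 - real i" unfolding k_def using i jk0 by (simp add: of_nat_diff)
    have kak: "k \<le> a" "k \<le> b" unfolding k_def using ka kb by auto
    have "real (f (k + 1) * (k + 1) * k) = real (f k * (a - k) * (b - k))" using step[OF k1] by simp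
    hence "real (f (k + 1)) * (real k + 1) * real k = real (f k) * (real a - real k) * (real b - real k)"
      by (simp only: of_nat_mult of_nat_diff[OF kak(1)] of_nat_diff[OF kak(2)] of_nat_add of_nat_1)
    hence eq: "real (f (k + 1)) * ((real k + 1) * real k) = real (f k) * ((real a - real k) * (real b - real k))"
      by (simp only: mult.assoc)
    have ci: "(real a - (real k0 - real i)) * (real b - (real k0 - real i))
        \<le> (1 + 1500 * real j / real n) * ((real k0 - real i + 1) * (real k0 - real i))"
      by (rule core_ineq[OF _ k0n _ _ _ _ mode]) (use n ka kb an bn i jn in auto)
    hence ci': "(real a - real k) * (real b - real k) \<le> \<rho> * ((real k + 1) * real k)"
      unfolding rk \<rho>_def by simp
    have "real (f (k + 1)) * ((real k + 1) * real k) \<le> real (f k) * (\<rho> * ((real k + 1) * real k))"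
      unfolding eq by (rule mult_left_mono[OF ci']) simp
    hence "real (f (k + 1)) * ((real k + 1) * real k) \<le> (\<rho> * real (f k)) * ((real k + 1) * real k)"
      by (simp add: algebra_simps)
    moreover have "0 < (real k + 1) * real k" using k1 by simp
    ultimately have "real (f (k + 1)) \<le> \<rho> * real (f k)" by (rule mult_right_le_imp_le)
    moreover have "k + 1 = k0 - i + 1" unfolding k_def ..
    ultimately show ?thesis unfolding k_def by simp
  qed
  have rho1: "1 \<le> \<rho>" unfolding \<rho>_def using npos by simp
  have chain: "i \<le> j \<Longrightarrow> real (f k0) \<le> \<rho> ^ i * real (f (k0 - i))" for i
  proof (induction i)
    case 0 thus ?case by simp
  next
    case (Suc i)
    have e: "k0 - Suc i + 1 = k0 - i" using Suc.prems jk0 by simp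
    have "real (f k0) \<le> \<rho> ^ i * real (f (k0 - i))" using Suc by simp
    also have "\<dots> \<le> \<rho> ^ i * (\<rho> * real (f (k0 - Suc i)))"
      using stepr[of "Suc i"] Suc.prems e rho1 by (intro mult_left_mono) auto
    finally show ?case by (simp add: algebra_simps)
  qed
  have rhoj: "\<rho> ^ j \<le> 3"
  proof -
    have "\<rho> \<le> exp (1500 * real j / real n)" unfolding \<rho>_def by (rule exp_ge_add_one_self)
    hence "\<rho> ^ j \<le> exp (1500 * real j / real n) ^ j" using rho1 by (intro power_mono) auto
    also have "\<dots> = exp (real j * (1500 * real j / real n))" by (rule exp_of_nat_mult[symmetric])
    also have "\<dots> \<le> exp 1"
    proof -
      have "real j * real j \<le> (sqrt (real n) / 40) * (sqrt (real n) / 40)" using jle by (intro mult_mono) auto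
      also have "\<dots> = real n / 1600" using sq by (simp add: field_simps)
      finally have "real j * real j \<le> real n / 1600" .
      hence "real j * (1500 * real j / real n) \<le> 1" using npos by (simp add: field_simps)
      thus ?thesis by simp
    qed
    also have "\<dots> \<le> 3" by (rule exp_le)
    finally show ?thesis .
  qed
  have each: "real (f k0) \<le> 3 * real (f (k0 - i))" if "i \<in> {0..j}" for i
  proof -
    have "real (f k0) \<le> \<rho> ^ i * real (f (k0 - i))" using chain that by simp
    also have "\<dots> \<le> \<rho> ^ j * real (f (k0 - i))" using that rho1 by (intro mult_right_mono power_increasing) auto
    also have "\<dots> \<le> 3 * real (f (k0 - i))" using rhoj by (intro mult_right_mono) auto
    finally show ?thesis .
  qed
  have "(real j + 1) * real (f k0) = (\<Sum>i\<in>{0..j}. real (f k0))" by simp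
  also have "\<dots> \<le> (\<Sum>i\<in>{0..j}. 3 * real (f (k0 - i)))" by (rule sum_mono) (rule each)
  also have "\<dots> = 3 * real (\<Sum>i\<in>{0..j}. f (k0 - i))" by (simp add: sum_distrib_left)
  finally have "(real j + 1) * real (f k0) \<le> 3 * real (\<Sum>i\<in>{0..j}. f (k0 - i))" .
  moreover have "sqrt (real n) / 40 * real (f k0) \<le> (real j + 1) * real (f k0)"
    using jge by (intro mult_right_mono) auto
  ultimately show ?thesis unfolding j_def by linarith
qed

end


lemma q_neg: "r < 0 \<Longrightarrow> q n r = 0"
  by (simp add: q_def QPr_def)

lemma q_binom: assumes r: "0 \<le> r" and rn: "2 * r \<le> int n"
  shows "q n r = nat (int n - r + 1) choose nat r"
proof -
  obtain R where R: "r = int R" using r nonneg_int_cases by blast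
  define M where "M = nat (int n - 2 * r)"
  have nM: "int n = int M + 2 * int R" unfolding M_def using rn R by simp
  have m1: "1 \<le> int n - 2 * r + 1" using rn by simp
  have a: "nat (r + 1) = R + 1" using R by simp
  have mm: "nat (int n - 2 * r + 1) = M + 1" unfolding M_def using rn by simp
  define g where "g t = (M choose t) * ((R + 1) choose (t + 1))" for t
  have "q n r = (\<Sum>k\<in>{1..M + 1}. T (R + 1) M k)"
    using q_T_sum[OF r m1] unfolding a mm M_def by simp
  also have "\<dots> = (\<Sum>t\<in>{0..M}. T (R + 1) M (Suc t))"
    by (rule sum.reindex_bij_witness[of _ Suc "\<lambda>k. k - 1"]) auto
  also have "\<dots> = (\<Sum>t\<in>{0..M}. g t)" by (simp add: T_def g_def mult.commute)
  also have "\<dots> = (\<Sum>t\<in>{0..M + R}. g t)"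
    by (rule sum.mono_neutral_left) (auto simp: g_def binomial_eq_0)
  also have "\<dots> = (\<Sum>t\<in>{0..R}. g t)"
    by (rule sum.mono_neutral_right) (auto simp: g_def binomial_eq_0)
  also have "\<dots> = (\<Sum>t\<le>R. (M choose t) * ((R + 1) choose (R - t)))"
  proof -
    have "g t = (M choose t) * ((R + 1) choose (R - t))" if "t \<le> R" for t
    proof -
      have "(R + 1) choose (t + 1) = (R + 1) choose (R + 1 - (t + 1))"
        using that by (intro binomial_symmetric) simp
      thus ?thesis unfolding g_def using that by simp
    qed
    thus ?thesis by (simp add: atLeast0AtMost)
  qed
  also have "\<dots> = (M + (R + 1)) choose R" by (rule vandermonde)
  also have "M + (R + 1) = nat (int n - r + 1)" using nM R by simp
  finally show ?thesis using R by simp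
qed

lemma binom_ratio: "((N - 1) choose (R + 1)) * (R + 1) * N = (N choose R) * (N - R) * (N - R - 1)"
proof -
  have 1: "Suc R * ((N - 1) choose Suc R) = (N - 1) * ((N - 1 - 1) choose R)" by (rule binomial_absorption)
  have 2: "(N - R) * (N choose R) = N * ((N - 1) choose R)" by (rule binomial_absorb_comp)
  have 3: "(N - 1 - R) * ((N - 1) choose R) = (N - 1) * ((N - 1 - 1) choose R)" by (rule binomial_absorb_comp)
  have "((N - 1) choose (R + 1)) * (R + 1) * N = N * (Suc R * ((N - 1) choose Suc R))" by (simp add: mult_ac)
  also have "\<dots> = N * ((N - 1 - R) * ((N - 1) choose R))" unfolding 1 3 ..
  also have "\<dots> = ((N - R) * (N choose R)) * (N - 1 - R)" unfolding 2 by (simp add: mult_ac)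
  also have "\<dots> = (N choose R) * (N - R) * (N - R - 1)" by (simp add: mult_ac)
  finally show ?thesis .
qed

lemma q_ratio: assumes r: "0 \<le> r" and rn: "2 * (r + 1) \<le> int n"
  shows "real (q n (r + 1)) * (real_of_int r + 1) * (real n - real_of_int r + 1)
       = real (q n r) * (real n - 2 * real_of_int r + 1) * (real n - 2 * real_of_int r)"
proof -
  obtain R where R: "r = int R" using r nonneg_int_cases by blast
  define N where "N = n - R + 1"
  have RN: "2 * R + 2 \<le> n" using rn R by simp
  have q1: "q n (r + 1) = (N - 1) choose (R + 1)"
  proof -
    have "q n (r + 1) = nat (int n - (r + 1) + 1) choose nat (r + 1)" by (rule q_binom) (use r rn in auto)
    moreover have "nat (int n - (r + 1) + 1) = N - 1" "nat (r + 1) = R + 1" using R RN unfolding N_def by auto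
    ultimately show ?thesis by simp
  qed
  have q0: "q n r = N choose R"
  proof -
    have "q n r = nat (int n - r + 1) choose nat r" by (rule q_binom) (use r rn in auto)
    moreover have "nat (int n - r + 1) = N" "nat r = R" using R RN unfolding N_def by auto
    ultimately show ?thesis by simp
  qed
  have "real (((N - 1) choose (R + 1)) * (R + 1) * N) = real ((N choose R) * (N - R) * (N - R - 1))"
    using binom_ratio by simp
  hence BR: "real ((N - 1) choose (R + 1)) * (real R + 1) * real N = real (N choose R) * real (N - R) * real (N - R - 1)"
    by (simp only: of_nat_mult of_nat_add of_nat_1)
  have n1: "real N = real n - real R + 1" "real (N - R) = real n - 2 * real R + 1"
    "real (N - R - 1) = real n - 2 * real R" using RN unfolding N_def by (simp_all add: of_nat_diff)
  have e1: "real (q n (r + 1)) = real ((N - 1) choose (R + 1))" using q1 by simp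
  have e0: "real (q n r) = real (N choose R)" using q0 by simp
  have rr: "real_of_int r = real R" using R by simp
  show ?thesis unfolding e1 e0 rr using BR unfolding n1 .
qed


lemma q_le1: assumes "int n < 2 * r" shows "q n r \<le> 1"
proof -
  have each: "qd n r d \<le> (if d = 0 then 1 else 0)" for d
  proof -
    define m where "m = int n - 2 * r + 1"
    have m0: "m \<le> 0" using assms m_def by simp
    have G: "qd n r d = bi (r + 1) (m - d) * cmp m (m - d)" unfolding qd_G G_def m_def by simp
    show ?thesis
    proof (cases "m = 0 \<and> d = 0")
      case True
      hence "qd n r d = bi (r + 1) 0" using G by (simp add: cmp_def)
      also have "\<dots> \<le> 1" by (simp add: bi_def)
      finally show ?thesis using True by simp
    next
      case False
      have c: "cmp m (m - d) = 0"
      proof -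
        have "\<not> (m = 0 \<and> m - d = 0)" using False by auto
        moreover have "\<not> (1 \<le> m - d \<and> m - d \<le> m)" using m0 by auto
        ultimately show ?thesis unfolding cmp_def by simp
      qed
      thus ?thesis using G by simp
    qed
  qed
  have "q n r = (\<Sum>d\<in>{0..int n}. qd n r d)" by (rule sum_qd_eq)
  also have "\<dots> \<le> (\<Sum>d\<in>{0..int n}. (if d = 0 then 1 else 0))" by (rule sum_mono) (rule each)
  also have "\<dots> = 1" by (simp add: sum.delta')
  finally show ?thesis .
qed

lemma q_one: "2 \<le> n \<Longrightarrow> q n 1 = n"
proof -
  assume n: "2 \<le> n"
  have "q n 1 = nat (int n - 1 + 1) choose nat 1" by (rule q_binom) (use n in auto)
  thus ?thesis by simp
qed

lemma rs_loc:
  assumes n: "100 \<le> n" and rsmax: "\<forall>r'. q n r' \<le> q n rs"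
  shows "real n / 4 - 1 < real_of_int rs \<and> real_of_int rs < 8 * real n / 25 + 1"
proof -
  have qn: "n \<le> q n rs"
  proof -
    have "q n 1 \<le> q n rs" using rsmax by blast
    moreover have "q n 1 = n" using n by (intro q_one) simp
    ultimately show ?thesis by simp
  qed
  have qpos: "0 < q n rs" using qn n by simp
  have rs0: "0 \<le> rs"
  proof (rule ccontr)
    assume "\<not> 0 \<le> rs"
    hence "q n rs = 0" by (intro q_neg) simp
    thus False using qpos by simp
  qed
  have rsn: "2 * rs \<le> int n"
  proof (rule ccontr)
    assume "\<not> 2 * rs \<le> int n"
    hence "q n rs \<le> 1" by (intro q_le1) simp
    thus False using qn n by simp
  qed
  define x where "x = real_of_int rs"
  have nr: "100 \<le> real n" using n by simp
  have A: "real n / 4 - 1 < x"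
  proof (rule ccontr)
    assume "\<not> real n / 4 - 1 < x"
    hence xa: "x \<le> real n / 4 - 1" by simp
    have x0: "0 \<le> x" using rs0 x_def by simp
    have "real_of_int (2 * (rs + 1)) \<le> real n" using xa x_def by simp
    hence rn: "2 * (rs + 1) \<le> int n" by linarith
    have rat: "real (q n (rs + 1)) * (x + 1) * (real n - x + 1) = real (q n rs) * (real n - 2 * x + 1) * (real n - 2 * x)"
      using q_ratio[OF rs0 rn] unfolding x_def .
    define L where "L = (x + 1) * (real n - x + 1)"
    define R where "R = (real n - 2 * x + 1) * (real n - 2 * x)"
    have L0: "0 < L" unfolding L_def using x0 xa by (intro mult_pos_pos) auto
    have "L \<le> (real n / 4) * (real n + 1)" unfolding L_def using x0 xa by (intro mult_mono) auto
    also have "\<dots> < (real n / 2 + 3) * (real n / 2 + 2)" using nr by (simp add: algebra_simps)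
    also have "\<dots> \<le> R" unfolding R_def using xa x0 by (intro mult_mono) auto
    finally have LR: "L < R" .
    have "real (q n rs) * L < real (q n rs) * R" using LR qpos by simp
    also have "\<dots> = real (q n (rs + 1)) * L" using rat unfolding L_def R_def by (simp add: mult.assoc)
    finally have "real (q n rs) < real (q n (rs + 1))" using L0 by simp
    thus False using rsmax by (metis not_le of_nat_le_iff)
  qed
  have B: "x < 8 * real n / 25 + 1"
  proof (rule ccontr)
    assume "\<not> x < 8 * real n / 25 + 1"
    hence xb: "8 * real n / 25 + 1 \<le> x" by simp
    define y where "y = x - 1"
    have y0: "0 \<le> y" using xb y_def nr by simp
    have rs1: "0 \<le> rs - 1" using y0 y_def x_def by simp
    have rn: "2 * (rs - 1 + 1) \<le> int n" using rsn by simp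
    have yn: "2 * y + 2 \<le> real n" using rsn y_def x_def by linarith
    have rat: "real (q n (rs - 1 + 1)) * (y + 1) * (real n - y + 1) = real (q n (rs - 1)) * (real n - 2 * y + 1) * (real n - 2 * y)"
      using q_ratio[OF rs1 rn] unfolding y_def x_def by simp
    define L where "L = (y + 1) * (real n - y + 1)"
    define R where "R = (real n - 2 * y + 1) * (real n - 2 * y)"
    have R0: "0 < R" unfolding R_def using yn by (intro mult_pos_pos) auto
    have "R \<le> (9 * real n / 25 + 1) * (9 * real n / 25)" unfolding R_def using xb y_def yn by (intro mult_mono) auto
    also have "\<dots> < (8 * real n / 25) * (real n / 2 + 1)"
    proof -
      have h: "100 * real n \<le> real n * real n" using nr by (intro mult_right_mono) auto
      have e1: "(9 * real n / 25 + 1) * (9 * real n / 25) = 81 / 625 * (real n * real n) + 9 / 25 * real n"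
        by (simp add: algebra_simps)
      have e2: "(8 * real n / 25) * (real n / 2 + 1) = 4 / 25 * (real n * real n) + 8 / 25 * real n"
        by (simp add: algebra_simps)
      show ?thesis unfolding e1 e2 using h nr by linarith
    qed
    also have "\<dots> \<le> L" unfolding L_def using xb y_def yn nr by (intro mult_mono) auto
    finally have RL: "R < L" .
    have "real (q n rs) * R < real (q n rs) * L" using RL qpos by simp
    also have "\<dots> = real (q n (rs - 1)) * R" using rat unfolding L_def R_def by (simp add: mult.assoc)
    finally have "real (q n rs) < real (q n (rs - 1))" using R0 by simp
    thus False using rsmax by (metis not_le of_nat_le_iff)
  qed
  show ?thesis using A B x_def by simp
qed

lemma sqrt_nlogn: assumes n: "400000000 \<le> n" shows "sqrt (real n * ln (real n)) \<le> real n / 100"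
proof -
  have nr: "400000000 \<le> real n" using n by simp
  have sn: "20000 \<le> sqrt (real n)" by (rule real_le_rsqrt) (use nr in simp)
  have sq: "sqrt (real n) * sqrt (real n) = real n" by simp
  have "ln (real n) = 2 * ln (sqrt (real n))" using nr by (simp add: ln_sqrt)
  also have "\<dots> \<le> 2 * sqrt (real n)"
  proof -
    have "ln (sqrt (real n)) < sqrt (real n)" by (rule ln_less_self) (use n in simp)
    thus ?thesis by simp
  qed
  finally have l: "ln (real n) \<le> 2 * sqrt (real n)" .
  have "real n * ln (real n) \<le> real n * (2 * sqrt (real n))" using l nr by (intro mult_left_mono) auto
  also have "\<dots> \<le> real n * (sqrt (real n) * sqrt (real n) / 10000)"
  proof -
    have "20000 * sqrt (real n) \<le> sqrt (real n) * sqrt (real n)" using sn by (intro mult_right_mono) auto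
    hence "2 * sqrt (real n) \<le> sqrt (real n) * sqrt (real n) / 10000" by linarith
    thus ?thesis using nr by (intro mult_left_mono) auto
  qed
  also have "\<dots> = (real n / 100) ^ 2" using sq by (simp add: power2_eq_square)
  finally show ?thesis using nr by (intro real_le_lsqrt) auto
qed

lemma main_bounds:
  fixes n :: nat and rs r ds :: int
  assumes n1: "1 \<le> n" and rsmax: "\<forall>r'. q n r' \<le> q n rs"
    and rr: "real_of_int \<bar>r - rs\<bar> \<le> sqrt (real n * ln (real n))"
    and dsmax: "\<forall>d'. qd n r d' \<le> qd n r ds"
  shows "real (q n r) \<le> 40000 * sqrt (real n) * real (qd n r ds) \<and>
         real (qd n r ds) * sqrt (real n) \<le> 20000 * real (q n r)"
proof (cases "real n < 400000000")
  case True
  have sn: "sqrt (real n) < 20000"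
  proof (rule ccontr)
    assume "\<not> sqrt (real n) < 20000"
    hence "20000 * 20000 \<le> sqrt (real n) * sqrt (real n)" by (intro mult_mono) auto
    thus False using True by simp
  qed
  have sn1: "1 \<le> sqrt (real n)" using n1 by simp
  have low: "q n r \<le> (n + 1) * qd n r ds"
  proof -
    have "q n r = (\<Sum>d\<in>{0..int n}. qd n r d)" by (rule sum_qd_eq)
    also have "\<dots> \<le> card {0..int n} * qd n r ds"
      using sum_bounded_above[of "{0..int n}" "qd n r" "qd n r ds"] dsmax by simp
    also have "card {0..int n} = n + 1" by simp
    finally show ?thesis .
  qed
  have up: "qd n r ds \<le> q n r" using sum_qd_le[of "{ds}" n r] by simp
  have "real (q n r) \<le> (real n + 1) * real (qd n r ds)" using low
    by (metis of_nat_1 of_nat_add of_nat_le_iff of_nat_mult)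
  also have "\<dots> \<le> 40000 * sqrt (real n) * real (qd n r ds)"
  proof (rule mult_right_mono)
    have "real n = sqrt (real n) * sqrt (real n)" by simp
    also have "\<dots> \<le> 20000 * sqrt (real n)" using sn by (intro mult_right_mono) auto
    finally show "real n + 1 \<le> 40000 * sqrt (real n)" using sn1 by linarith
  qed simp
  finally have A: "real (q n r) \<le> 40000 * sqrt (real n) * real (qd n r ds)" .
  have "real (qd n r ds) * sqrt (real n) \<le> real (q n r) * 20000"
    using up sn by (intro mult_mono) auto
  thus ?thesis using A by simp
next
  case False
  hence nbig: "400000000 \<le> n" by simp
  have nr: "400000000 \<le> real n" using nbig by simp
  have loc: "real n / 4 - 1 < real_of_int rs \<and> real_of_int rs < 8 * real n / 25 + 1"
    by (rule rs_loc) (use nbig rsmax in auto)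
  have rr': "\<bar>real_of_int r - real_of_int rs\<bar> \<le> real n / 100"
    using rr sqrt_nlogn[OF nbig] by simp
  define x where "x = real_of_int r"
  have xlo: "6 * real n / 25 - 1 \<le> x" using loc rr' x_def by linarith
  have xhi: "x \<le> 33 * real n / 100 + 1" using loc rr' x_def by linarith
  have r0: "0 \<le> r" using xlo nr x_def by linarith
  have m1: "1 \<le> int n - 2 * r + 1" using xhi nr x_def by linarith
  define a where "a = nat (r + 1)"
  define M where "M = nat (int n - 2 * r)"
  define m where "m = int n - 2 * r + 1"
  define f where "f = T a M"
  define k0 where "k0 = nat (m - ds)"
  have ra: "real a = x + 1" unfolding a_def x_def using r0 by simp
  have rM: "real (M + 1) = real n - 2 * x + 1" unfolding M_def x_def using m1 by simp
  have qdT: "qd n r d = f (nat (m - d))" for d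
    unfolding f_def a_def M_def m_def using qd_T[OF r0 m1] by simp
  have fmax: "f k \<le> f k0" for k
  proof -
    have "f k = qd n r (m - int k)" using qdT[of "m - int k"] by simp
    also have "\<dots> \<le> qd n r ds" using dsmax by blast
    also have "\<dots> = f k0" unfolding k0_def by (rule qdT)
    finally show ?thesis .
  qed
  have qsum: "q n r = (\<Sum>k\<in>{1..nat m}. f k)"
    unfolding f_def a_def M_def m_def using q_T_sum[OF r0 m1] by simp
  have qdk0: "qd n r ds = f k0" unfolding k0_def by (rule qdT)
  show ?thesis
  proof (cases "f k0 = 0")
    case True
    hence "\<forall>k. f k = 0" using fmax by (metis le_zero_eq)
    hence "q n r = 0" using qsum by simp
    thus ?thesis using qdk0 True by simp
  next
    case False
    hence fpos: "0 < f k0" by simp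
    have tp: "1 \<le> k0 \<and> k0 \<le> a \<and> k0 \<le> M + 1" using T_pos fpos unfolding f_def by blast
    have k01: "1 \<le> k0" and ka: "k0 \<le> a" and kb: "k0 \<le> M + 1" using tp by auto
    have step: "1 \<le> k \<Longrightarrow> f (k + 1) * (k + 1) * k = f k * (a - k) * (M + 1 - k)" for k
      unfolding f_def by (rule T_step)
    have sn: "1 \<le> sqrt (real n)" using n1 by simp
    have lo: "real (q n r) \<le> 8 * sqrt (real n + 1) * real (f k0)"
    proof -
      have "real k0 \<le> real n + 1" using ka ra xhi nr by linarith
      hence "real (\<Sum>k\<in>{1..nat m}. f k) \<le> 8 * sqrt (real n + 1) * real (f k0)"
        by (intro lo_real[OF step fmax fpos k01]) auto
      thus ?thesis using qsum by simp
    qed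
    have s2: "sqrt (real n + 1) \<le> 2 * sqrt (real n)"
    proof -
      have "sqrt (real n + 1) \<le> sqrt (4 * real n)" using n1 by (intro real_sqrt_le_mono) simp
      also have "\<dots> = 2 * sqrt (real n)" by (simp add: real_sqrt_mult)
      finally show ?thesis .
    qed
    have A: "real (q n r) \<le> 40000 * sqrt (real n) * real (qd n r ds)"
    proof -
      have "8 * sqrt (real n + 1) * real (f k0) \<le> 8 * (2 * sqrt (real n)) * real (f k0)"
        using s2 by (intro mult_right_mono) auto
      also have "\<dots> \<le> 40000 * sqrt (real n) * real (f k0)" using sn by (intro mult_right_mono) auto
      finally have X: "8 * sqrt (real n + 1) * real (f k0) \<le> 40000 * sqrt (real n) * real (f k0)" .
      show ?thesis unfolding qdk0 using lo X by linarith
    qed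
    have k0n: "real n / 10 \<le> real k0"
      by (rule mode_location[OF step fmax fpos k01 ka kb]) (use nr ra rM xlo xhi in auto)
    have "real a \<le> real (n + 1)" using ra xhi nr by simp
    hence aN: "a \<le> n + 1" by (simp only: of_nat_le_iff)
    have "real (M + 1) \<le> real (n + 1)" using rM xlo nr by simp
    hence bN: "M + 1 \<le> n + 1" by (simp only: of_nat_le_iff)
    define j where "j = nat \<lfloor>sqrt (real n) / 40\<rfloor>"
    have ub: "sqrt (real n) / 40 * real (f k0) \<le> 3 * real (\<Sum>i\<in>{0..j}. f (k0 - i))"
      unfolding j_def by (rule up_bound[OF step fmax fpos k01 ka kb]) (use nbig k0n aN bN in auto)
    have mk: "m - ds = int k0" unfolding k0_def using k01 k0_def by simp
    have fsum: "(\<Sum>i\<in>{0..j}. f (k0 - i)) \<le> q n r"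
    proof -
      have e: "f (k0 - i) = qd n r (ds + int i)" for i
      proof -
        have "nat (m - (ds + int i)) = k0 - i" using mk by simp
        thus ?thesis using qdT[of "ds + int i"] by simp
      qed
      have inj: "inj_on (\<lambda>i. ds + int i) {0..j}" by (rule inj_onI) simp
      have "(\<Sum>i\<in>{0..j}. f (k0 - i)) = (\<Sum>i\<in>{0..j}. qd n r (ds + int i))" using e by simp
      also have "\<dots> = (\<Sum>d\<in>(\<lambda>i. ds + int i) ` {0..j}. qd n r d)" using sum.reindex[OF inj, of "qd n r"] by (simp add: o_def)
      also have "\<dots> \<le> q n r" by (rule sum_qd_le) simp
      finally show ?thesis .
    qed
    have "real (\<Sum>i\<in>{0..j}. f (k0 - i)) \<le> real (q n r)" using fsum by (simp only: of_nat_le_iff)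
    hence "sqrt (real n) / 40 * real (qd n r ds) \<le> 3 * real (q n r)"
      unfolding qdk0 using ub by linarith
    hence "real (qd n r ds) * sqrt (real n) \<le> 120 * real (q n r)" by (simp add: algebra_simps)
    hence B: "real (qd n r ds) * sqrt (real n) \<le> 20000 * real (q n r)" by simp
    show ?thesis using A B by simp
  qed
qed

theorem mainTheorem9:
  shows "\<exists>C1 C2 :: real. C1 > 0 \<and> C2 > 0 \<and>
    (\<forall>(n::nat) (rs::int) (r::int) (ds::int).
       n \<ge> 1 \<longrightarrow>
       (\<forall>r'. q n r' \<le> q n rs) \<longrightarrow>
       real_of_int \<bar>r - rs\<bar> \<le> sqrt (real n * ln (real n)) \<longrightarrow>
       (\<forall>d'. qd n r d' \<le> qd n r ds) \<longrightarrow>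
       C1 * real (q n r) / sqrt (real n) \<le> real (qd n r ds) \<and>
       real (qd n r ds) \<le> C2 * real (q n r) / sqrt (real n))"
proof -
  have H: "1 / 40000 * real (q n r) / sqrt (real n) \<le> real (qd n r ds) \<and>
       real (qd n r ds) \<le> 20000 * real (q n r) / sqrt (real n)"
    if n1: "n \<ge> 1" and rsmax: "\<forall>r'. q n r' \<le> q n rs"
    and rr: "real_of_int \<bar>r - rs\<bar> \<le> sqrt (real n * ln (real n))"
    and dsmax: "\<forall>d'. qd n r d' \<le> qd n r ds" for n :: nat and rs r ds :: int
  proof -
    have mb: "real (q n r) \<le> 40000 * sqrt (real n) * real (qd n r ds) \<and>
         real (qd n r ds) * sqrt (real n) \<le> 20000 * real (q n r)"
      by (rule main_bounds[OF n1 rsmax rr dsmax])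
    have sp: "0 < sqrt (real n)" using n1 by simp
    have l: "1 / 40000 * real (q n r) / sqrt (real n) \<le> real (qd n r ds)"
      using mb sp by (simp add: field_simps)
    have u: "real (qd n r ds) \<le> 20000 * real (q n r) / sqrt (real n)"
      using mb sp by (simp add: field_simps)
    show ?thesis using l u by blast
  qed
  show ?thesis
    by (rule exI[of _ "1 / 40000"], rule exI[of _ "20000"]) (use H in auto)
qed

end
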